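(* Let $V$ be finite and $n\ge2$. The functions $m_G$, as $G$ ranges over all multigraphs on $V$ without self-loops and with $|E(G)|\le n-1$, are linearly independent as functions on $(S^{n-1})^V$.
   Context: $S^{n-1}=\{x\in\mathbb{R}^n:\|x\|_2=1\}$. A multigraph on $V$ without self-loops is a finite multiset of pairs $\{u,w\}$ with $u\ne w\in V$. $m_G=\prod_{\{u,w\}\in E(G)}\langle d_u,d_w\rangle$ (with multiplicity), for $(d_u)_{u\in V}\in(S^{n-1})^V$. *)

theory Defs
  imports "HOL-Analysis.Analysis" "HOL-Library.Multiset"
begin

definition is_edge :: "'v set \<Rightarrow> bool" where
  "is_edge e \<longleftrightarrow> (\<exists>u w. u \<noteq> w \<and> e = {u, w})"

definition multigraphs :: "'v set multiset set" where
  "multigraphs = {G. \<forall>e\<in>#G. is_edge e}"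

text \<open>Inner product attached to an edge {u,w}: <d_u, d_w> (well defined by symmetry).\<close>
definition edge_ip :: "('v \<Rightarrow> real^'n) \<Rightarrow> 'v set \<Rightarrow> real" where
  "edge_ip d e = (THE r. \<exists>u w. u \<noteq> w \<and> e = {u, w} \<and> r = inner (d u) (d w))"

definition mG :: "'v set multiset \<Rightarrow> ('v \<Rightarrow> real^'n) \<Rightarrow> real" where
  "mG G d = prod_mset (image_mset (edge_ip d) G)"

definition lin_indep_on :: "'x set \<Rightarrow> ('i \<Rightarrow> 'x \<Rightarrow> real) \<Rightarrow> 'i set \<Rightarrow> bool" where
  "lin_indep_on D f I \<longleftrightarrow>
     (\<forall>F c. finite F \<and> F \<subseteq> I \<and> (\<forall>x\<in>D. (\<Sum>i\<in>F. c i * f i x) = 0) \<longrightarrow> (\<forall>i\<in>F. c i = 0))"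

end

theory Submission
  imports Defs
begin

lemma edge_ip_pair: "u \<noteq> w \<Longrightarrow> edge_ip d {u,w} = inner (d u) (d w)"
  unfolding edge_ip_def
  apply (rule the_equality)
   apply blast
  by (auto simp: doubleton_eq_iff inner_commute)

definition ep :: "'v set \<Rightarrow> 'v \<times> 'v" where
  "ep e = (SOME p. fst p \<noteq> snd p \<and> e = {fst p, snd p})"

lemma ep: "is_edge e \<Longrightarrow> fst (ep e) \<noteq> snd (ep e) \<and> e = {fst (ep e), snd (ep e)}"
  unfolding ep_def is_edge_def by (rule someI_ex) auto

lemma mG_list:
  assumes "\<forall>e\<in>set gs. is_edge e"
  shows "mG (mset gs) d = (\<Prod>i<length gs. inner (d (fst (ep (gs!i)))) (d (snd (ep (gs!i)))))"
proof -
  have "mG (mset gs) d = prod_list (map (edge_ip d) gs)"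
    unfolding mG_def by (simp flip: mset_map prod_mset_prod_list)
  also have "\<dots> = (\<Prod>i<length gs. edge_ip d (gs!i))"
    by (simp add: prod.list_conv_set_nth atLeast0LessThan)
  also have "\<dots> = (\<Prod>i<length gs. inner (d (fst (ep (gs!i)))) (d (snd (ep (gs!i)))))"
  proof (rule prod.cong[OF refl])
    fix i assume "i \<in> {..<length gs}"
    then have "is_edge (gs!i)" using assms by auto
    from ep[OF this] show "edge_ip d (gs!i) = inner (d (fst (ep (gs!i)))) (d (snd (ep (gs!i))))"
      by (metis edge_ip_pair)
  qed
  finally show ?thesis .
qed

lemma sign_sum:
  fixes c :: "'a \<Rightarrow> nat"
  assumes "finite A"
  shows "(\<Sum>\<epsilon>\<in>PiE A (\<lambda>_. {-1,1::real}). \<Prod>x\<in>A. \<epsilon> x ^ c x) = (if \<forall>x\<in>A. even (c x) then 2 ^ card A else 0)"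
proof -
  have "(\<Sum>\<epsilon>\<in>PiE A (\<lambda>_. {-1,1::real}). \<Prod>x\<in>A. \<epsilon> x ^ c x) = (\<Prod>x\<in>A. \<Sum>y\<in>{-1,1::real}. y ^ c x)"
    by (rule prod_sum_PiE[symmetric]) (use assms in auto)
  also have "\<dots> = (\<Prod>x\<in>A. if even (c x) then 2 else 0)"
    by (rule prod.cong) auto
  also have "\<dots> = (if \<forall>x\<in>A. even (c x) then 2 ^ card A else 0)"
    using assms by (auto simp: prod_zero_iff)
  finally show ?thesis .
qed

lemma prod_mset_pow:
  assumes "finite A" "set_mset P \<subseteq> A"
  shows "prod_mset (image_mset (\<epsilon>::'a\<Rightarrow>real) P) = (\<Prod>x\<in>A. \<epsilon> x ^ count P x)"
  using assms(2)
proof (induction P)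
  case empty then show ?case by simp
next
  case (add y P)
  then have yA: "y \<in> A" by auto
  have "(\<Prod>x\<in>A. \<epsilon> x ^ count (add_mset y P) x) = \<epsilon> y ^ count (add_mset y P) y * (\<Prod>x\<in>A-{y}. \<epsilon> x ^ count (add_mset y P) x)"
    using yA assms(1) by (simp add: prod.remove)
  also have "(\<Prod>x\<in>A-{y}. \<epsilon> x ^ count (add_mset y P) x) = (\<Prod>x\<in>A-{y}. \<epsilon> x ^ count P x)"
    by (rule prod.cong) auto
  also have "\<epsilon> y ^ count (add_mset y P) y = \<epsilon> y * \<epsilon> y ^ count P y" by simp
  also have "\<epsilon> y * \<epsilon> y ^ count P y * (\<Prod>x\<in>A-{y}. \<epsilon> x ^ count P x) = \<epsilon> y * (\<Prod>x\<in>A. \<epsilon> x ^ count P x)"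
    using yA assms(1) by (simp add: prod.remove mult.assoc)
  finally show ?case using add by simp
qed

lemma parity_core:
  fixes U W a b :: "nat \<Rightarrow> 'v" and l :: "nat \<Rightarrow> nat"
  assumes UW: "\<forall>j<k. U j \<noteq> W j" and ab: "\<forall>i<m. a i \<noteq> b i" and mk: "m \<le> k"
    and l: "\<forall>i<m. l i < k"
    and ev: "\<forall>v. \<forall>j<k. even (count ((\<Sum>j<k. {#(U j,j),(W j,j)#}) + (\<Sum>i<m. {#(a i,l i),(b i,l i)#})) (v,j))"
  shows "inj_on l {..<m} \<and> l ` {..<m} = {..<k} \<and> (\<forall>i<m. {a i, b i} = {U (l i), W (l i)})"
proof -
  have cw: "count (\<Sum>j'<k. {#(U j',j'),(W j',j')#}) (v,j) = of_bool (U j = v) + of_bool (W j = v)"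
    if "j < k" for v j
  proof -
    have "count (\<Sum>j'<k. {#(U j',j'),(W j',j')#}) (v,j) = (\<Sum>j'<k. count {#(U j',j'),(W j',j')#} (v,j))"
      by (simp add: count_sum)
    also have "\<dots> = count {#(U j,j),(W j,j)#} (v,j) + (\<Sum>j'\<in>{..<k}-{j}. count {#(U j',j'),(W j',j')#} (v,j))"
      using that by (simp add: sum.remove)
    also have "(\<Sum>j'\<in>{..<k}-{j}. count {#(U j',j'),(W j',j')#} (v,j)) = 0"
      by (rule sum.neutral) auto
    finally show ?thesis by auto
  qed
  have ce: "count (\<Sum>i<m. {#(a i,l i),(b i,l i)#}) (v,j) = (\<Sum>i<m. of_bool (a i = v \<and> l i = j) + of_bool (b i = v \<and> l i = j))" for v j
    unfolding count_sum by (intro sum.cong) auto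
  have surj: "\<exists>i<m. l i = j" if "j < k" for j
  proof (rule ccontr)
    assume "\<not> (\<exists>i<m. l i = j)"
    then have "count (\<Sum>i<m. {#(a i,l i),(b i,l i)#}) (U j,j) = 0"
      unfolding ce by (intro sum.neutral) auto
    moreover have "count (\<Sum>j'<k. {#(U j',j'),(W j',j')#}) (U j,j) = 1"
      proof -
      have "U j \<noteq> W j" using UW that by auto
      then show ?thesis using cw[OF that, of "U j"] by simp
    qed
    ultimately have "count ((\<Sum>j<k. {#(U j,j),(W j,j)#}) + (\<Sum>i<m. {#(a i,l i),(b i,l i)#})) (U j,j) = 1"
      by simp
    moreover have "even (count ((\<Sum>j<k. {#(U j,j),(W j,j)#}) + (\<Sum>i<m. {#(a i,l i),(b i,l i)#})) (U j,j))"
      using ev that by blast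
    ultimately show False by simp
  qed
  have img: "l ` {..<m} = {..<k}"
    using l surj by auto
  have "card (l ` {..<m}) = card {..<m}"
  proof -
    have "card (l ` {..<m}) \<le> card {..<m}" by (rule card_image_le) simp
    moreover have "card (l ` {..<m}) = k" using img by simp
    ultimately show ?thesis using mk by simp
  qed
  then have inj: "inj_on l {..<m}" by (intro eq_card_imp_inj_on) auto
  have pair: "{a i, b i} = {U (l i), W (l i)}" if i: "i < m" for i
  proof -
    define j where "j = l i"
    have jk: "j < k" using l i j_def by auto
    have ce2: "count (\<Sum>i<m. {#(a i,l i),(b i,l i)#}) (v,j) = of_bool (a i = v) + of_bool (b i = v)" for v
    proof -
      have "count (\<Sum>i<m. {#(a i,l i),(b i,l i)#}) (v,j) = (\<Sum>i'<m. of_bool (a i' = v \<and> l i' = j) + of_bool (b i' = v \<and> l i' = j))"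
        by (rule ce)
      also have "\<dots> = (of_bool (a i = v \<and> l i = j) + of_bool (b i = v \<and> l i = j)) + (\<Sum>i'\<in>{..<m}-{i}. of_bool (a i' = v \<and> l i' = j) + of_bool (b i' = v \<and> l i' = j))"
        using i by (simp add: sum.remove)
      also have "(\<Sum>i'\<in>{..<m}-{i}. of_bool (a i' = v \<and> l i' = j) + of_bool (b i' = v \<and> l i' = j)) = (0::nat)"
      proof (rule sum.neutral, intro ballI)
        fix i' assume "i' \<in> {..<m}-{i}"
        then have "l i' \<noteq> j" using inj i unfolding j_def inj_on_def by auto
        then show "of_bool (a i' = v \<and> l i' = j) + of_bool (b i' = v \<and> l i' = j) = (0::nat)" by simp
      qed
      finally show ?thesis unfolding j_def by simp
    qed
    have tot: "even (of_bool (U j = v) + of_bool (W j = v) + (of_bool (a i = v) + of_bool (b i = v)) :: nat)" for v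
    proof -
      have "even (count ((\<Sum>j<k. {#(U j,j),(W j,j)#}) + (\<Sum>i<m. {#(a i,l i),(b i,l i)#})) (v,j))"
        using ev jk by blast
      then show ?thesis by (simp only: count_union cw[OF jk] ce2)
    qed
    have UWne: "U j \<noteq> W j" using UW jk by auto
    have "U j \<in> {a i, b i}"
    proof (rule ccontr)
      assume "U j \<notin> {a i, b i}"
      then have "a i \<noteq> U j" "b i \<noteq> U j" by auto
      then show False using tot[of "U j"] UWne by simp
    qed
    moreover have "W j \<in> {a i, b i}"
    proof (rule ccontr)
      assume "W j \<notin> {a i, b i}"
      then have "a i \<noteq> W j" "b i \<noteq> W j" by auto
      then show False using tot[of "W j"] UWne by simp
    qed
    ultimately have "{a i, b i} = {U j, W j}" using UWne by (auto simp: doubleton_eq_iff)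
    then show ?thesis unfolding j_def .
  qed
  show ?thesis using inj img pair by blast
qed

lemma pm_sum: "finite J \<Longrightarrow> prod_mset (image_mset \<epsilon> (sum f J)) = (\<Prod>j\<in>J. prod_mset (image_mset \<epsilon> (f j)))"
  by (induction J rule: finite_induct) auto

definition Dv :: "nat \<Rightarrow> (nat \<Rightarrow> 'n) \<Rightarrow> ('v \<times> nat \<Rightarrow> real) \<Rightarrow> 'v \<Rightarrow> real^'n" where
  "Dv k \<iota> \<epsilon> u = (1 / sqrt (real k)) *\<^sub>R (\<Sum>j<k. \<epsilon> (u,j) *\<^sub>R axis (\<iota> j) 1)"

lemma Dv_inner:
  assumes "inj_on \<iota> {..<k}"
  shows "inner (Dv k \<iota> \<epsilon> u) (Dv k \<iota> \<epsilon> w) = (\<Sum>j<k. \<epsilon> (u,j) * \<epsilon> (w,j)) / real k"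
proof -
  have "inner (\<Sum>j<k. \<epsilon> (u,j) *\<^sub>R axis (\<iota> j) (1::real)) (\<Sum>j<k. \<epsilon> (w,j) *\<^sub>R axis (\<iota> j) 1)
     = (\<Sum>j<k. \<Sum>j'<k. \<epsilon> (u,j) * \<epsilon> (w,j') * (if \<iota> j = \<iota> j' then 1 else 0))"
  proof -
    have "inner (\<Sum>j<k. \<epsilon> (u,j) *\<^sub>R axis (\<iota> j) (1::real)) (\<Sum>j<k. \<epsilon> (w,j) *\<^sub>R axis (\<iota> j) 1)
      = (\<Sum>j<k. \<Sum>j'<k. inner (\<epsilon> (u,j) *\<^sub>R axis (\<iota> j) (1::real)) (\<epsilon> (w,j') *\<^sub>R axis (\<iota> j') 1))"
      by (simp only: inner_sum_left inner_sum_right) (rule sum.swap)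
    also have "\<dots> = (\<Sum>j<k. \<Sum>j'<k. \<epsilon> (u,j) * \<epsilon> (w,j') * (if \<iota> j = \<iota> j' then 1 else 0))"
      by (intro sum.cong refl) (simp add: inner_axis_axis)
    finally show ?thesis .
  qed
  also have "\<dots> = (\<Sum>j<k. \<Sum>j'<k. if j = j' then \<epsilon> (u,j) * \<epsilon> (w,j') else 0)"
  proof (intro sum.cong refl)
    fix j j' assume "j \<in> {..<k}" "j' \<in> {..<k}"
    then have "(\<iota> j = \<iota> j') = (j = j')" using assms unfolding inj_on_def by auto
    then show "\<epsilon> (u,j) * \<epsilon> (w,j') * (if \<iota> j = \<iota> j' then 1 else 0) = (if j = j' then \<epsilon> (u,j) * \<epsilon> (w,j') else 0)"
      by simp
  qed
  also have "\<dots> = (\<Sum>j<k. \<epsilon> (u,j) * \<epsilon> (w,j))"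
  proof (rule sum.cong[OF refl])
    fix j assume "j \<in> {..<k}"
    then show "(\<Sum>j'<k. if j = j' then \<epsilon> (u,j) * \<epsilon> (w,j') else 0) = \<epsilon> (u,j) * \<epsilon> (w,j)"
      by (simp add: sum.delta')
  qed
  finally have *: "inner (\<Sum>j<k. \<epsilon> (u,j) *\<^sub>R axis (\<iota> j) (1::real)) (\<Sum>j<k. \<epsilon> (w,j) *\<^sub>R axis (\<iota> j) 1) = (\<Sum>j<k. \<epsilon> (u,j) * \<epsilon> (w,j))" .
  have "inner (Dv k \<iota> \<epsilon> u) (Dv k \<iota> \<epsilon> w) = (1 / sqrt (real k)) * (1 / sqrt (real k)) * (\<Sum>j<k. \<epsilon> (u,j) * \<epsilon> (w,j))"
    unfolding Dv_def using * by (simp add: inner_scaleR_left inner_scaleR_right)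
  also have "(1 / sqrt (real k)) * (1 / sqrt (real k)) = 1 / real k"
  proof -
    have "(1 / sqrt (real k)) * (1 / sqrt (real k)) = 1 / (sqrt (real k) * sqrt (real k))" by simp
    also have "sqrt (real k) * sqrt (real k) = real k" by simp
    finally show ?thesis .
  qed
  finally show ?thesis by simp
qed

lemma Dv_sphere:
  assumes "inj_on \<iota> {..<k}" "k \<ge> 1" "\<forall>j<k. \<epsilon> (u,j) \<in> {-1,1}"
  shows "Dv k \<iota> \<epsilon> u \<in> sphere 0 1"
proof -
  have "inner (Dv k \<iota> \<epsilon> u) (Dv k \<iota> \<epsilon> u) = (\<Sum>j<k. \<epsilon> (u,j) * \<epsilon> (u,j)) / real k"
    by (rule Dv_inner[OF assms(1)])
  also have "(\<Sum>j<k. \<epsilon> (u,j) * \<epsilon> (u,j)) = (\<Sum>j<k. 1)"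
    using assms(3) by (intro sum.cong) auto
  finally have "inner (Dv k \<iota> \<epsilon> u) (Dv k \<iota> \<epsilon> u) = 1" using assms(2) by simp
  then have "norm (Dv k \<iota> \<epsilon> u) = 1" by (simp add: norm_eq_sqrt_inner)
  then show ?thesis by simp
qed

definition Pm :: "(nat \<Rightarrow> 'v) \<Rightarrow> (nat \<Rightarrow> 'v) \<Rightarrow> 'v set list \<Rightarrow> nat \<Rightarrow> (nat \<Rightarrow> nat) \<Rightarrow> ('v \<times> nat) multiset" where
  "Pm U W gs k l = (\<Sum>j<k. {#(U j,j),(W j,j)#}) + (\<Sum>i<length gs. {#(fst (ep (gs!i)), l i),(snd (ep (gs!i)), l i)#})"

lemma L_formula:
  fixes gs :: "'v::finite set list" and \<iota> :: "nat \<Rightarrow> 'n::finite" and U W :: "nat \<Rightarrow> 'v"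
  assumes inj: "inj_on \<iota> {..<k}" and edges: "\<forall>e\<in>set gs. is_edge e"
  shows "(\<Sum>\<epsilon>\<in>PiE (UNIV \<times> {..<k}) (\<lambda>_. {-1,1::real}). (\<Prod>j<k. \<epsilon> (U j,j) * \<epsilon> (W j,j)) * mG (mset gs) (Dv k \<iota> \<epsilon>))
   = (1/real k)^length gs * (\<Sum>l\<in>PiE {..<length gs} (\<lambda>_. {..<k}).
        if \<forall>x\<in>UNIV \<times> {..<k}. even (count (Pm U W gs k l) x) then 2 ^ card (UNIV \<times> {..<k} :: ('v\<times>nat) set) else 0)"
proof -
  define m where "m = length gs"
  define a where "a i = fst (ep (gs!i))" for i
  define b where "b i = snd (ep (gs!i))" for i
  define A where "A = (UNIV \<times> {..<k} :: ('v\<times>nat) set)"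
  define E where "E = PiE A (\<lambda>_. {-1,1::real})"
  define L where "L = PiE {..<m} (\<lambda>_. {..<k})"
  define Wt where "Wt \<epsilon> = (\<Prod>j<k. \<epsilon> (U j,j) * \<epsilon> (W j,j))" for \<epsilon> :: "'v\<times>nat \<Rightarrow> real"
  define T where "T \<epsilon> l = (\<Prod>i<m. \<epsilon> (a i, l i) * \<epsilon> (b i, l i))" for \<epsilon> :: "'v\<times>nat \<Rightarrow> real" and l
  have finA: "finite A" unfolding A_def by simp
  have mG_eq: "mG (mset gs) (Dv k \<iota> \<epsilon>) = (1/real k)^m * (\<Sum>l\<in>L. T \<epsilon> l)" for \<epsilon>
  proof -
    have "mG (mset gs) (Dv k \<iota> \<epsilon>) = (\<Prod>i<m. inner (Dv k \<iota> \<epsilon> (a i)) (Dv k \<iota> \<epsilon> (b i)))"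
      unfolding m_def a_def b_def by (rule mG_list[OF edges])
    also have "\<dots> = (\<Prod>i<m. (1/real k) * (\<Sum>j<k. \<epsilon> (a i,j) * \<epsilon> (b i,j)))"
      by (intro prod.cong refl) (simp add: Dv_inner[OF inj])
    also have "\<dots> = (1/real k)^m * (\<Prod>i<m. \<Sum>j<k. \<epsilon> (a i,j) * \<epsilon> (b i,j))"
      by (simp only: prod.distrib prod_constant card_lessThan)
    also have "(\<Prod>i<m. \<Sum>j<k. \<epsilon> (a i,j) * \<epsilon> (b i,j)) = (\<Sum>l\<in>L. T \<epsilon> l)"
      unfolding L_def T_def by (rule prod_sum_PiE) auto
    finally show ?thesis .
  qed
  have WT: "Wt \<epsilon> * T \<epsilon> l = (\<Prod>x\<in>A. \<epsilon> x ^ count (Pm U W gs k l) x)" if l: "l \<in> L" for \<epsilon> l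
  proof -
    have "Wt \<epsilon> * T \<epsilon> l = prod_mset (image_mset \<epsilon> (Pm U W gs k l))"
      unfolding Pm_def image_mset_union prod_mset.union Wt_def T_def m_def a_def b_def
      by (simp add: pm_sum)
    also have "\<dots> = (\<Prod>x\<in>A. \<epsilon> x ^ count (Pm U W gs k l) x)"
    proof (rule prod_mset_pow[OF finA])
      show "set_mset (Pm U W gs k l) \<subseteq> A"
        using l unfolding Pm_def A_def L_def m_def by (auto simp: PiE_iff set_mset_sum)
    qed
    finally show ?thesis .
  qed
  have "(\<Sum>\<epsilon>\<in>E. Wt \<epsilon> * mG (mset gs) (Dv k \<iota> \<epsilon>)) = (\<Sum>\<epsilon>\<in>E. (1/real k)^m * (\<Sum>l\<in>L. Wt \<epsilon> * T \<epsilon> l))"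
    by (intro sum.cong refl) (simp only: mG_eq sum_distrib_left[symmetric] mult_ac)
  also have "\<dots> = (1/real k)^m * (\<Sum>l\<in>L. \<Sum>\<epsilon>\<in>E. Wt \<epsilon> * T \<epsilon> l)"
  proof -
    have "(\<Sum>\<epsilon>\<in>E. (1/real k)^m * (\<Sum>l\<in>L. Wt \<epsilon> * T \<epsilon> l)) = (1/real k)^m * (\<Sum>\<epsilon>\<in>E. \<Sum>l\<in>L. Wt \<epsilon> * T \<epsilon> l)"
      by (simp only: sum_distrib_left)
    also have "(\<Sum>\<epsilon>\<in>E. \<Sum>l\<in>L. Wt \<epsilon> * T \<epsilon> l) = (\<Sum>l\<in>L. \<Sum>\<epsilon>\<in>E. Wt \<epsilon> * T \<epsilon> l)"
      by (rule sum.swap)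
    finally show ?thesis .
  qed
  also have "(\<Sum>l\<in>L. \<Sum>\<epsilon>\<in>E. Wt \<epsilon> * T \<epsilon> l) = (\<Sum>l\<in>L. if \<forall>x\<in>A. even (count (Pm U W gs k l) x) then 2 ^ card A else 0)"
  proof (intro sum.cong refl)
    fix l assume l: "l \<in> L"
    have "(\<Sum>\<epsilon>\<in>E. Wt \<epsilon> * T \<epsilon> l) = (\<Sum>\<epsilon>\<in>E. \<Prod>x\<in>A. \<epsilon> x ^ count (Pm U W gs k l) x)"
      by (intro sum.cong refl) (rule WT[OF l])
    also have "\<dots> = (if \<forall>x\<in>A. even (count (Pm U W gs k l) x) then 2 ^ card A else 0)"
      unfolding E_def by (rule sign_sum[OF finA])
    finally show "(\<Sum>\<epsilon>\<in>E. Wt \<epsilon> * T \<epsilon> l) = (if \<forall>x\<in>A. even (count (Pm U W gs k l) x) then 2 ^ card A else 0)" .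
  qed
  finally show ?thesis unfolding E_def A_def Wt_def L_def m_def .
qed

lemma mset_nth: "mset xs = image_mset (nth xs) (mset_set {..<length xs})"
proof -
  have "mset xs = mset (map (nth xs) [0..<length xs])" by (simp add: map_nth)
  also have "\<dots> = image_mset (nth xs) (mset_set {..<length xs})"
    by (simp add: atLeast0LessThan)
  finally show ?thesis .
qed

lemma L_zero:
  fixes gs es :: "'v::finite set list" and \<iota> :: "nat \<Rightarrow> 'n::finite" and U W :: "nat \<Rightarrow> 'v"
  assumes inj: "inj_on \<iota> {..<k}" and edges: "\<forall>e\<in>set gs. is_edge e"
    and len: "length gs \<le> k" and les: "length es = k"
    and UW: "\<forall>j<k. U j \<noteq> W j" and esUW: "\<forall>j<k. es!j = {U j, W j}"
    and ne: "mset gs \<noteq> mset es"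
  shows "(\<Sum>\<epsilon>\<in>PiE (UNIV \<times> {..<k}) (\<lambda>_. {-1,1::real}). (\<Prod>j<k. \<epsilon> (U j,j) * \<epsilon> (W j,j)) * mG (mset gs) (Dv k \<iota> \<epsilon>)) = 0"
proof -
  define m where "m = length gs"
  define a where "a i = fst (ep (gs!i))" for i
  define b where "b i = snd (ep (gs!i))" for i
  have ab: "\<forall>i<m. a i \<noteq> b i \<and> gs!i = {a i, b i}"
    using edges ep unfolding a_def b_def m_def by (metis nth_mem)
  have "(\<Sum>l\<in>PiE {..<length gs} (\<lambda>_. {..<k}).
        if \<forall>x\<in>UNIV \<times> {..<k}. even (count (Pm U W gs k l) x) then 2 ^ card (UNIV \<times> {..<k} :: ('v\<times>nat) set) else 0) = (0::real)"
  proof (rule sum.neutral, intro ballI)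
    fix l assume l: "l \<in> PiE {..<length gs} (\<lambda>_. {..<k})"
    have "\<not> (\<forall>x\<in>UNIV \<times> {..<k}. even (count (Pm U W gs k l) x))"
    proof
      assume ev: "\<forall>x\<in>UNIV \<times> {..<k}. even (count (Pm U W gs k l) x)"
      have lk: "\<forall>i<m. l i < k" using l unfolding m_def by (auto simp: PiE_iff)
      have "inj_on l {..<m} \<and> l ` {..<m} = {..<k} \<and> (\<forall>i<m. {a i, b i} = {U (l i), W (l i)})"
      proof (rule parity_core[OF UW _ _ lk])
        show "\<forall>i<m. a i \<noteq> b i" using ab by blast
        show "m \<le> k" using len m_def by simp
        show "\<forall>v. \<forall>j<k. even (count ((\<Sum>j<k. {#(U j, j), (W j, j)#}) + (\<Sum>i<m. {#(a i, l i), (b i, l i)#})) (v, j))"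
          using ev unfolding Pm_def a_def b_def m_def by auto
      qed
      then have inj_l: "inj_on l {..<m}" and img: "l ` {..<m} = {..<k}"
        and pr: "\<forall>i<m. {a i, b i} = {U (l i), W (l i)}" by auto
      have gsi: "gs!i = es!(l i)" if "i < m" for i
        using pr ab esUW lk that by metis
      have "mset gs = image_mset (nth gs) (mset_set {..<m})" unfolding m_def by (rule mset_nth)
      also have "\<dots> = image_mset (\<lambda>i. es!(l i)) (mset_set {..<m})"
        by (intro image_mset_cong) (simp add: gsi)
      also have "\<dots> = image_mset (nth es) (image_mset l (mset_set {..<m}))"
        by (simp add: multiset.map_comp o_def)
      also have "image_mset l (mset_set {..<m}) = mset_set {..<k}"
        by (simp add: image_mset_mset_set[OF inj_l] img)
      also have "image_mset (nth es) (mset_set {..<k}) = mset es"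
        using mset_nth[of es] les by simp
      finally show False using ne by simp
    qed
    then show "(if \<forall>x\<in>UNIV \<times> {..<k}. even (count (Pm U W gs k l) x) then 2 ^ card (UNIV \<times> {..<k} :: ('v\<times>nat) set) else 0) = (0::real)"
      by simp
  qed
  then show ?thesis by (simp add: L_formula[OF inj edges])
qed

lemma L_pos:
  fixes es :: "'v::finite set list" and \<iota> :: "nat \<Rightarrow> 'n::finite"
  assumes inj: "inj_on \<iota> {..<k}" and edges: "\<forall>e\<in>set es. is_edge e" and les: "length es = k"
  shows "(\<Sum>\<epsilon>\<in>PiE (UNIV \<times> {..<k}) (\<lambda>_. {-1,1::real}).
      (\<Prod>j<k. \<epsilon> (fst (ep (es!j)),j) * \<epsilon> (snd (ep (es!j)),j)) * mG (mset es) (Dv k \<iota> \<epsilon>)) > 0"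
proof -
  define U where "U j = fst (ep (es!j))" for j
  define W where "W j = snd (ep (es!j))" for j
  define f where "f l = (if \<forall>x\<in>UNIV \<times> {..<k}. even (count (Pm U W es k l) x) then 2 ^ card (UNIV \<times> {..<k} :: ('v\<times>nat) set) else (0::real))" for l
  define l0 where "l0 i = (if i < k then i else undefined)" for i :: nat
  have l0: "l0 \<in> PiE {..<length es} (\<lambda>_. {..<k})" using les unfolding l0_def by (auto simp: PiE_iff extensional_def)
  have "Pm U W es k l0 = (\<Sum>j<k. {#(U j,j),(W j,j)#}) + (\<Sum>j<k. {#(U j,j),(W j,j)#})"
    unfolding Pm_def U_def W_def les l0_def by (intro arg_cong2[where f="(+)"] refl sum.cong) auto
  then have "\<forall>x\<in>UNIV \<times> {..<k}. even (count (Pm U W es k l0) x)" by simp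
  then have f0: "f l0 > 0" unfolding f_def by simp
  have "(\<Sum>l\<in>PiE {..<length es} (\<lambda>_. {..<k}). f l) \<ge> f l0"
    by (rule member_le_sum[OF l0]) (auto simp: f_def finite_PiE)
  then have "(\<Sum>l\<in>PiE {..<length es} (\<lambda>_. {..<k}). f l) > 0" using f0 by simp
  moreover have "k > 0 \<or> length es = 0" using les by (cases k) auto
  ultimately show ?thesis
    unfolding L_formula[OF inj edges] f_def[symmetric] U_def[symmetric] W_def[symmetric]
    by (auto simp: les)
qed

theorem mainTheorem6:
  assumes "CARD('n) \<ge> 2"
  shows "lin_indep_on {d :: 'v::finite \<Rightarrow> real^'n. \<forall>v. d v \<in> sphere 0 1}
           mG {G \<in> multigraphs. size G \<le> CARD('n) - 1}"
  unfolding lin_indep_on_def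
proof (intro allI impI)
  fix F and c :: "'v set multiset \<Rightarrow> real"
  assume H: "finite F \<and> F \<subseteq> {G \<in> multigraphs. size G \<le> CARD('n) - 1} \<and>
    (\<forall>x\<in>{d :: 'v::finite \<Rightarrow> real^'n. \<forall>v. d v \<in> sphere 0 1}. (\<Sum>i\<in>F. c i * mG i x) = 0)"
  then have finF: "finite F" and FM: "F \<subseteq> {G \<in> multigraphs. size G \<le> CARD('n) - 1}"
    and vanish: "\<And>x :: 'v \<Rightarrow> real^'n. (\<forall>v. x v \<in> sphere 0 1) \<Longrightarrow> (\<Sum>i\<in>F. c i * mG i x) = 0"
    by auto
  show "\<forall>i\<in>F. c i = 0"
  proof (rule ccontr)
    assume "\<not> (\<forall>i\<in>F. c i = 0)"
    define Z where "Z = {G\<in>F. c G \<noteq> 0}"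
    have Zne: "Z \<noteq> {}" using \<open>\<not> (\<forall>i\<in>F. c i = 0)\<close> unfolding Z_def by auto
    have finZ: "finite Z" using finF unfolding Z_def by simp
    have "Max (size ` Z) \<in> size ` Z" using Zne finZ by (intro Max_in) auto
    then obtain G0 where G0Z: "G0 \<in> Z" and G0max: "size G0 = Max (size ` Z)" by auto
    have maxsz: "\<forall>G\<in>Z. size G \<le> size G0" using finZ G0max by simp
    have sumZ: "(\<Sum>i\<in>F. c i * mG i x) = (\<Sum>i\<in>Z. c i * mG i x)" for x :: "'v \<Rightarrow> real^'n"
      by (rule sum.mono_neutral_right) (use finF in \<open>auto simp: Z_def\<close>)
    obtain es where es: "mset es = G0" using ex_mset by blast
    define k where "k = length es"
    have G0F: "G0 \<in> F" using G0Z Z_def by auto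
    then have G0mg: "G0 \<in> multigraphs" and G0sz: "size G0 \<le> CARD('n) - 1" using FM by auto
    have edges: "\<forall>e\<in>set es. is_edge e" using G0mg es unfolding multigraphs_def by auto
    have ksz: "k = size G0" using es k_def by auto
    have cG0: "c G0 \<noteq> 0" using G0Z Z_def by auto
    show False
    proof (cases "k = 0")
      case True
      then have G0e: "G0 = {#}" using ksz by simp
      have "Z \<subseteq> {G0}" using maxsz G0e by auto
      then have ZG0: "Z = {G0}" using G0Z by auto
      define d0 where "d0 = (\<lambda>v::'v. axis (undefined::'n) (1::real))"
      have "\<forall>v. d0 v \<in> sphere 0 1" unfolding d0_def by simp
      then have "(\<Sum>i\<in>F. c i * mG i d0) = 0" by (rule vanish)
      then have "c G0 * mG G0 d0 = 0" using sumZ ZG0 by simp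
      then show False using cG0 G0e by (simp add: mG_def)
    next
      case False
      then have k1: "k \<ge> 1" by simp
      have kn: "k < CARD('n)" using ksz G0sz assms by simp
      obtain h where h: "bij_betw h {0..<card (UNIV::'n set)} (UNIV::'n set)"
        using ex_bij_betw_nat_finite[of "UNIV::'n set"] by auto
      have inj: "inj_on h {..<k}"
        using kn by (intro inj_on_subset[OF bij_betw_imp_inj_on[OF h]]) auto
      define U where "U j = fst (ep (es!j))" for j
      define W where "W j = snd (ep (es!j))" for j
      have UW: "\<forall>j<k. U j \<noteq> W j" and esUW: "\<forall>j<k. es!j = {U j, W j}"
        using ep edges unfolding U_def W_def k_def by (metis nth_mem)+
      define E where "E = PiE (UNIV \<times> {..<k}) (\<lambda>_::'v\<times>nat. {-1,1::real})"
      define Wt where "Wt \<epsilon> = (\<Prod>j<k. \<epsilon> (U j,j) * \<epsilon> (W j,j))" for \<epsilon> :: "'v\<times>nat \<Rightarrow> real"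
      define S where "S G = (\<Sum>\<epsilon>\<in>E. Wt \<epsilon> * mG G (Dv k h \<epsilon>))" for G
      have "(\<Sum>\<epsilon>\<in>E. Wt \<epsilon> * (\<Sum>G\<in>Z. c G * mG G (Dv k h \<epsilon>))) = 0"
      proof (rule sum.neutral, intro ballI)
        fix \<epsilon> assume "\<epsilon> \<in> E"
        then have "\<forall>v. Dv k h \<epsilon> v \<in> sphere 0 1"
          unfolding E_def by (intro allI Dv_sphere[OF inj k1]) (auto simp: PiE_iff)
        then have "(\<Sum>i\<in>F. c i * mG i (Dv k h \<epsilon>)) = 0" by (rule vanish)
        then show "Wt \<epsilon> * (\<Sum>G\<in>Z. c G * mG G (Dv k h \<epsilon>)) = 0" using sumZ by simp
      qed
      also have "(\<Sum>\<epsilon>\<in>E. Wt \<epsilon> * (\<Sum>G\<in>Z. c G * mG G (Dv k h \<epsilon>))) = (\<Sum>G\<in>Z. c G * S G)"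
      proof -
        have "(\<Sum>\<epsilon>\<in>E. Wt \<epsilon> * (\<Sum>G\<in>Z. c G * mG G (Dv k h \<epsilon>))) = (\<Sum>\<epsilon>\<in>E. \<Sum>G\<in>Z. c G * (Wt \<epsilon> * mG G (Dv k h \<epsilon>)))"
          by (simp add: sum_distrib_left mult_ac)
        also have "\<dots> = (\<Sum>G\<in>Z. \<Sum>\<epsilon>\<in>E. c G * (Wt \<epsilon> * mG G (Dv k h \<epsilon>)))" by (rule sum.swap)
        also have "\<dots> = (\<Sum>G\<in>Z. c G * S G)" unfolding S_def by (simp add: sum_distrib_left)
        finally show ?thesis .
      qed
      also have "(\<Sum>G\<in>Z. c G * S G) = c G0 * S G0 + (\<Sum>G\<in>Z-{G0}. c G * S G)"
        using finZ G0Z by (simp add: sum.remove)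
      also have "(\<Sum>G\<in>Z-{G0}. c G * S G) = 0"
      proof (rule sum.neutral, intro ballI)
        fix G assume GZ: "G \<in> Z - {G0}"
        obtain gs where gs: "mset gs = G" using ex_mset by blast
        have "G \<in> multigraphs" using GZ FM Z_def by auto
        then have gedges: "\<forall>e\<in>set gs. is_edge e" using gs unfolding multigraphs_def by auto
        have glen: "length gs \<le> k" using maxsz GZ gs ksz by auto
        have gne: "mset gs \<noteq> mset es" using gs es GZ by auto
        have "S G = 0" unfolding S_def E_def Wt_def gs[symmetric]
          by (rule L_zero[OF inj gedges glen k_def[symmetric] UW esUW gne])
        then show "c G * S G = 0" by simp
      qed
      finally have "c G0 * S G0 = 0" by simp
      moreover have "S G0 > 0" unfolding S_def E_def Wt_def U_def W_def es[symmetric]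
        by (rule L_pos[OF inj edges k_def[symmetric]])
      ultimately show False using cG0 by simp
    qed
  qed
qed

end
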